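(* For $k=1,2,\dots$ let $f_k(x)=x+(-1)^k e^{e^k}$ and $p_k=\frac1k-\frac1{k+1}=\frac{1}{k(k+1)}$, and let $\mu$ be the probability measure on $\mathrm{Homeo}_+(\mathbb{R})$ with $\mu(\{f_k\})=p_k$. Then for every $x\in\mathbb{R}$ and every compact interval $J\subset\mathbb{R}$, almost surely $F_n(x)\in J$ for only finitely many $n$. The same conclusion holds if each $f_k$ is replaced by a map $\tilde f_k:\mathbb{R}\to\mathbb{R}$ (chosen with the same probability $p_k$) such that $\sup_{k\ge1}\sup_{x\in\mathbb{R}}|\tilde f_k(x)-f_k(x)|<\infty$.
   Context: Given the maps and probabilities, let $g_1,g_2,\dots$ be i.i.d. random maps, with $g_n$ equal to the $k$-th map with probability $p_k$, and $F_n=g_n\circ\cdots\circ g_1$. *)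

theory Defs
  imports "HOL-Probability.Probability"
begin

definition fmap :: "nat \<Rightarrow> real \<Rightarrow> real" where
  "fmap k x = x + (-1) ^ k * exp (exp (real k))"

definition pk :: "nat \<Rightarrow> real" where
  "pk k = 1 / real k - 1 / real (k + 1)"

primrec Fcomp :: "(nat \<Rightarrow> real \<Rightarrow> real) \<Rightarrow> (nat \<Rightarrow> 'a \<Rightarrow> nat) \<Rightarrow> nat \<Rightarrow> 'a \<Rightarrow> real \<Rightarrow> real" where
  "Fcomp g \<xi> 0 \<omega> = id"
| "Fcomp g \<xi> (Suc n) \<omega> = g (\<xi> n \<omega>) \<circ> Fcomp g \<xi> n \<omega>"

end

theory Submission imports Defs "HOL-Real_Asymp.Real_Asymp" begin

definition sstep :: "nat \<Rightarrow> real" where "sstep k = (-1) ^ k * exp (exp (real k))"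

lemma Fcomp_approx:
  assumes g: "\<And>k y. k \<ge> 1 \<Longrightarrow> \<bar>g k y - fmap k y\<bar> \<le> C"
    and pos: "\<And>i. i < n \<Longrightarrow> \<xi> i \<omega> \<ge> 1"
  shows "\<bar>Fcomp g \<xi> n \<omega> x - (x + (\<Sum>i<n. sstep (\<xi> i \<omega>)))\<bar> \<le> real n * C"
  using pos
proof (induction n)
  case 0 then show ?case by simp
next
  case (Suc n)
  have IH: "\<bar>Fcomp g \<xi> n \<omega> x - (x + (\<Sum>i<n. sstep (\<xi> i \<omega>)))\<bar> \<le> real n * C"
    using Suc by auto
  have "\<bar>g (\<xi> n \<omega>) (Fcomp g \<xi> n \<omega> x) - fmap (\<xi> n \<omega>) (Fcomp g \<xi> n \<omega> x)\<bar> \<le> C"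
    using g Suc.prems by auto
  then show ?case using IH by (auto simp: fmap_def sstep_def abs_le_iff algebra_simps)
qed

lemma sum_bound:
  fixes h :: "nat \<Rightarrow> nat"
  assumes "n \<ge> 1" and K: "K = Max (h ` {..<n})"
  shows "\<bar>\<Sum>i<n. sstep (h i)\<bar> \<ge> exp (exp (real K)) - real n * exp (exp (real K - 1))"
proof -
  define I1 where "I1 = {i. i < n \<and> h i = K}"
  define I2 where "I2 = {i. i < n \<and> h i \<noteq> K}"
  have fin: "finite I1" "finite I2" unfolding I1_def I2_def by auto
  have un: "{..<n} = I1 \<union> I2" and dis: "I1 \<inter> I2 = {}" unfolding I1_def I2_def by auto
  have "K \<in> h ` {..<n}" unfolding K using assms(1) by (intro Max_in) (auto simp: lessThan_empty_iff)
  then have "I1 \<noteq> {}" unfolding I1_def by auto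
  then have c1: "card I1 \<ge> 1" using fin by (simp add: Suc_le_eq card_gt_0_iff)
  have lt: "h i < K" if "i \<in> I2" for i
  proof -
    have "h i \<le> K" unfolding K using that by (intro Max_ge) (auto simp: I2_def)
    then show ?thesis using that by (auto simp: I2_def)
  qed
  have s1: "(\<Sum>i\<in>I1. sstep (h i)) = real (card I1) * sstep K"
    by (simp add: I1_def)
  have a1: "\<bar>\<Sum>i\<in>I1. sstep (h i)\<bar> \<ge> exp (exp (real K))"
  proof -
    have "\<bar>sstep K\<bar> = exp (exp (real K))" by (simp add: sstep_def abs_mult)
    then have "\<bar>\<Sum>i\<in>I1. sstep (h i)\<bar> = real (card I1) * exp (exp (real K))"
      by (simp add: s1 abs_mult)
    moreover have "real (card I1) * exp (exp (real K)) \<ge> 1 * exp (exp (real K))"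
      using c1 by (intro mult_right_mono) auto
    ultimately show ?thesis by simp
  qed
  have a2: "\<bar>\<Sum>i\<in>I2. sstep (h i)\<bar> \<le> real n * exp (exp (real K - 1))"
  proof -
    have "\<bar>\<Sum>i\<in>I2. sstep (h i)\<bar> \<le> (\<Sum>i\<in>I2. \<bar>sstep (h i)\<bar>)" by (rule sum_abs)
    also have "\<dots> \<le> (\<Sum>i\<in>I2. exp (exp (real K - 1)))"
    proof (rule sum_mono)
      fix i assume "i \<in> I2"
      then have "Suc (h i) \<le> K" using lt by (simp add: Suc_le_eq)
      then have "real (Suc (h i)) \<le> real K" by (simp only: of_nat_le_iff)
      then have "real (h i) \<le> real K - 1" by simp
      then show "\<bar>sstep (h i)\<bar> \<le> exp (exp (real K - 1))" by (simp add: sstep_def abs_mult)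
    qed
    also have "\<dots> = real (card I2) * exp (exp (real K - 1))" by simp
    also have "\<dots> \<le> real n * exp (exp (real K - 1))"
    proof (intro mult_right_mono)
      have "card I2 \<le> card {..<n}" unfolding I2_def by (intro card_mono) auto
      then show "real (card I2) \<le> real n" by simp
    qed auto
    finally show ?thesis .
  qed
  have "(\<Sum>i<n. sstep (h i)) = (\<Sum>i\<in>I1. sstep (h i)) + (\<Sum>i\<in>I2. sstep (h i))"
    unfolding un using fin dis by (rule sum.union_disjoint)
  then show ?thesis using a1 a2 by linarith
qed

lemma asy: "filterlim (\<lambda>n. exp (sqrt (real n)) / real n) at_top sequentially"
  by real_asymp

lemma asy2: "eventually (\<lambda>n::nat. exp (1 - sqrt (real n)) \<le> 1 / real n ^ 2) sequentially"
  by real_asymp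


lemma escape:
  assumes C: "C \<ge> 0" and g: "\<And>k y. k \<ge> 1 \<Longrightarrow> \<bar>g k y - fmap k y\<bar> \<le> C"
    and pos: "\<And>i. i < n \<Longrightarrow> \<xi> i \<omega> \<ge> 1" and n: "n \<ge> 1"
    and ex: "\<exists>i<n. \<xi> i \<omega> \<ge> L" and Ls: "real L \<ge> sqrt (real n)"
    and W: "exp (sqrt (real n)) \<ge> real n + real n * C + \<bar>x\<bar> + B + 1"
    and B: "\<bar>a\<bar> \<le> B" "\<bar>b\<bar> \<le> B"
  shows "Fcomp g \<xi> n \<omega> x \<notin> {a..b}"
proof -
  define K where "K = Max ((\<lambda>i. \<xi> i \<omega>) ` {..<n})"
  define S where "S = (\<Sum>i<n. sstep (\<xi> i \<omega>))"
  define u where "u = exp (exp (real K - 1))"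
  have approx: "\<bar>Fcomp g \<xi> n \<omega> x - (x + S)\<bar> \<le> real n * C"
    unfolding S_def using Fcomp_approx[of g C n \<xi> \<omega> x] g pos by auto
  have Sb: "\<bar>S\<bar> \<ge> exp (exp (real K)) - real n * u"
    unfolding S_def u_def using sum_bound[OF n, of K "\<lambda>i. \<xi> i \<omega>"] K_def by simp
  obtain i where i: "i < n" "\<xi> i \<omega> \<ge> L" using ex by auto
  have "\<xi> i \<omega> \<le> K" unfolding K_def using i by (intro Max_ge) auto
  then have KL: "K \<ge> L" using i by simp
  have "K \<ge> 1" using pos[OF i(1)] \<open>\<xi> i \<omega> \<le> K\<close> by simp
  have e2: "exp (1::real) \<ge> 2" using exp_ge_add_one_self[of 1] by simp
  have "exp (real K) = exp (real K - 1) * exp 1" by (simp flip: exp_add)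
  also have "\<dots> \<ge> exp (real K - 1) * 2" using e2 by (intro mult_left_mono) auto
  finally have "exp (real K) \<ge> exp (real K - 1) + exp (real K - 1)" by simp
  then have "exp (exp (real K)) \<ge> exp (exp (real K - 1) + exp (real K - 1))" by simp
  then have uu: "exp (exp (real K)) \<ge> u * u" unfolding u_def by (simp only: exp_add)
  have "exp (real K - 1) \<ge> 1 + (real K - 1)" by (rule exp_ge_add_one_self)
  then have "u \<ge> exp (real K)" unfolding u_def by simp
  moreover have "exp (real K) \<ge> exp (sqrt (real n))" using KL Ls by simp
  ultimately have uW: "u \<ge> real n + real n * C + \<bar>x\<bar> + B + 1" using W by linarith
  define V where "V = real n * C + \<bar>x\<bar> + B + 1"
  have V1: "V \<ge> 1" unfolding V_def using C B by simp
  have u1: "u \<ge> 1" using uW V1 unfolding V_def by simp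
  have "u * u \<ge> u * (real n + V)" using uW u1 unfolding V_def by (intro mult_left_mono) auto
  moreover have "u * V \<ge> 1 * V" using u1 V1 by (intro mult_right_mono) auto
  ultimately have "u * u \<ge> real n * u + V" by (simp add: algebra_simps)
  then have "\<bar>S\<bar> \<ge> V" using Sb uu by linarith
  then have "\<bar>Fcomp g \<xi> n \<omega> x\<bar> > B" using approx unfolding V_def by linarith
  then show ?thesis using B by auto
qed

lemma sum_pk: "L \<ge> 1 \<Longrightarrow> (\<Sum>k\<in>{L..L+N}. pk k) = 1 / real L - 1 / real (L + N + 1)"
proof (induction N)
  case 0 then show ?case by (simp add: pk_def)
next
  case (Suc N)
  have "{L..L + Suc N} = insert (L + Suc N) {L..L+N}" by auto
  then show ?case using Suc by (simp add: pk_def)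
qed


definition Lf :: "nat \<Rightarrow> nat" where "Lf n = nat \<lfloor>sqrt (real n)\<rfloor> + 1"

lemma Lf_ge: "real (Lf n) \<ge> sqrt (real n)"
  unfolding Lf_def by (simp add: of_nat_nat) linarith

lemma Lf_le: "real (Lf n) \<le> sqrt (real n) + 1"
  unfolding Lf_def by (simp add: of_nat_nat)

context
  fixes M :: "'a measure" and \<xi> :: "nat \<Rightarrow> 'a \<Rightarrow> nat"
  assumes P: "prob_space M"
    and I: "prob_space.indep_vars M (\<lambda>_. count_space UNIV) \<xi> UNIV"
    and D: "\<And>n k. k \<ge> 1 \<Longrightarrow> measure M {\<omega> \<in> space M. \<xi> n \<omega> = k} = pk k"
begin

interpretation prob_space M by (rule P)

lemma meas: "\<xi> i \<in> measurable M (count_space UNIV)"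
  using I unfolding indep_vars_def2 by auto

lemma ev: "{\<omega> \<in> space M. Q (\<xi> i \<omega>)} \<in> events"
proof -
  have "\<xi> i -` {k. Q k} \<inter> space M \<in> events" by (rule measurable_sets[OF meas]) simp
  moreover have "\<xi> i -` {k. Q k} \<inter> space M = {\<omega> \<in> space M. Q (\<xi> i \<omega>)}" by auto
  ultimately show ?thesis by simp
qed

lemma ev_eq: "{\<omega> \<in> space M. \<xi> i \<omega> = k} \<in> events"
  using ev[of "\<lambda>x. x = k"] by simp

lemma prob_lt_aux:
  assumes L: "L \<ge> 1"
  shows "prob {\<omega> \<in> space M. \<xi> n \<omega> < L} \<le> 1 - 1 / real L + 1 / real (L + N + 1)"
proof -
  define U where "U = (\<Union>k\<in>{L..L+N}. {\<omega> \<in> space M. \<xi> n \<omega> = k})"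
  have "prob U = (\<Sum>k\<in>{L..L+N}. prob {\<omega> \<in> space M. \<xi> n \<omega> = k})"
    unfolding U_def by (intro measure_finite_Union) (auto simp: ev_eq disjoint_family_on_def)
  also have "\<dots> = (\<Sum>k\<in>{L..L+N}. pk k)" using L by (intro sum.cong) (auto simp: D)
  finally have pU: "prob U = 1 / real L - 1 / real (L + N + 1)" using sum_pk[OF L] by simp
  have Uev: "U \<in> events" unfolding U_def by (auto simp: ev_eq)
  have "{\<omega> \<in> space M. \<xi> n \<omega> < L} \<subseteq> space M - U" unfolding U_def by auto
  then have "prob {\<omega> \<in> space M. \<xi> n \<omega> < L} \<le> prob (space M - U)"
    by (intro finite_measure_mono) (auto simp: Uev)
  also have "\<dots> = 1 - prob U" by (rule prob_compl[OF Uev])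
  finally show ?thesis using pU by simp
qed

lemma prob_lt:
  assumes L: "L \<ge> 1"
  shows "prob {\<omega> \<in> space M. \<xi> n \<omega> < L} \<le> 1 - 1 / real L"
proof (rule ccontr)
  assume "\<not> ?thesis"
  then have "prob {\<omega> \<in> space M. \<xi> n \<omega> < L} - (1 - 1 / real L) > 0" by simp
  then obtain N where N: "inverse (real (Suc N)) < prob {\<omega> \<in> space M. \<xi> n \<omega> < L} - (1 - 1 / real L)"
    using reals_Archimedean by blast
  have "1 / real (L + N + 1) \<le> inverse (real (Suc N))"
    by (simp add: inverse_eq_divide frac_le)
  then show False using prob_lt_aux[OF L, of n N] N by linarith
qed

lemma AE_pos: "AE \<omega> in M. \<forall>i. \<xi> i \<omega> \<ge> 1"
proof (subst AE_all_countable, intro allI)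
  fix i
  have "prob {\<omega> \<in> space M. \<xi> i \<omega> < 1} \<le> 0" using prob_lt[of 1 i] by simp
  then have "prob {\<omega> \<in> space M. \<xi> i \<omega> < 1} = 0" using measure_nonneg by (metis order_antisym)
  then have "emeasure M {\<omega> \<in> space M. \<xi> i \<omega> < 1} = 0" by (simp add: emeasure_eq_measure)
  then show "AE \<omega> in M. \<xi> i \<omega> \<ge> 1" by (intro AE_I[OF _ _ ev]) auto
qed

lemma prob_all:
  assumes n: "n \<ge> 1"
  shows "prob {\<omega> \<in> space M. \<forall>i<n. \<xi> i \<omega> < L} = (\<Prod>i<n. prob {\<omega> \<in> space M. \<xi> i \<omega> < L})"
proof -
  have ind: "indep_sets (\<lambda>i. {\<xi> i -` A \<inter> space M | A. A \<in> sets (count_space UNIV)}) UNIV"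
    using I unfolding indep_vars_def2 by auto
  define A where "A = (\<lambda>i. \<xi> i -` {..<L} \<inter> space M)"
  have "prob (\<Inter>j\<in>{..<n}. A j) = (\<Prod>j\<in>{..<n}. prob (A j))"
  proof -
    have ne: "{..<n} \<noteq> {}" using n by (auto simp: lessThan_empty_iff)
    have AP: "A \<in> Pi {..<n} (\<lambda>i. {\<xi> i -` A \<inter> space M | A. A \<in> sets (count_space UNIV)})"
      unfolding A_def by auto
    have "\<forall>J\<subseteq>UNIV. J \<noteq> {} \<longrightarrow> finite J \<longrightarrow> (\<forall>A\<in>Pi J (\<lambda>i. {\<xi> i -` A \<inter> space M | A. A \<in> sets (count_space UNIV)}). prob (\<Inter>j\<in>J. A j) = (\<Prod>j\<in>J. prob (A j)))"
      using ind unfolding indep_sets_def by (rule conjunct2)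
    then have "\<forall>A\<in>Pi {..<n} (\<lambda>i. {\<xi> i -` A \<inter> space M | A. A \<in> sets (count_space UNIV)}). prob (\<Inter>j\<in>{..<n}. A j) = (\<Prod>j\<in>{..<n}. prob (A j))"
      using ne by simp
    then show ?thesis using AP by (rule bspec)
  qed
  moreover have "(\<Inter>j\<in>{..<n}. A j) = {\<omega> \<in> space M. \<forall>i<n. \<xi> i \<omega> < L}"
    using n unfolding A_def by (auto simp: lessThan_empty_iff)
  moreover have "A j = {\<omega> \<in> space M. \<xi> j \<omega> < L}" for j unfolding A_def by auto
  ultimately show ?thesis by simp
qed


lemma prob_A:
  assumes n: "n \<ge> 1"
  shows "prob {\<omega> \<in> space M. \<forall>i<n. \<xi> i \<omega> < Lf n} \<le> exp (1 - sqrt (real n))"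
proof -
  define L where "L = Lf n"
  have L1: "L \<ge> 1" unfolding L_def Lf_def by simp
  have "prob {\<omega> \<in> space M. \<forall>i<n. \<xi> i \<omega> < L} = (\<Prod>i<n. prob {\<omega> \<in> space M. \<xi> i \<omega> < L})"
    by (rule prob_all[OF n])
  also have "\<dots> \<le> (\<Prod>i<n. 1 - 1 / real L)"
    by (intro prod_mono) (auto simp: prob_lt[OF L1])
  also have "\<dots> = (1 - 1 / real L) ^ n" by simp
  also have "\<dots> \<le> exp (- (1 / real L)) ^ n"
    using exp_ge_add_one_self[of "- (1 / real L)"] L1 by (intro power_mono) auto
  also have "\<dots> = exp (real n * (- (1 / real L)))" by (subst exp_of_nat_mult) (rule refl)
  also have "\<dots> \<le> exp (1 - sqrt (real n))"
  proof -
    have s1: "sqrt (real n) \<ge> 1" using n by simp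
    have "(sqrt (real n) - 1) * real L \<le> (sqrt (real n) - 1) * (sqrt (real n) + 1)"
      using s1 Lf_le[of n] unfolding L_def by (intro mult_left_mono) auto
    also have "\<dots> = real n - 1" by (simp add: algebra_simps)
    finally have "(sqrt (real n) - 1) * real L \<le> real n" by simp
    then have "sqrt (real n) - 1 \<le> real n / real L" using L1 by (simp add: field_simps)
    then show ?thesis by (simp add: field_simps)
  qed
  finally show ?thesis unfolding L_def .
qed

lemma AE_esc: "AE \<omega> in M. eventually (\<lambda>n. \<exists>i<n. \<xi> i \<omega> \<ge> Lf n) sequentially"
proof -
  define A where "A n = {\<omega> \<in> space M. \<forall>i<n. \<xi> i \<omega> < Lf n}" for n
  have A_eq: "A n = space M - (\<Union>i<n. {\<omega> \<in> space M. \<xi> i \<omega> \<ge> Lf n})" for n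
    unfolding A_def by auto
  have Aev: "A n \<in> events" for n unfolding A_eq by (intro sets.Diff sets.finite_UN) (auto simp: ev)
  have ev1: "eventually (\<lambda>n. norm (prob (A n)) \<le> 1 / real n ^ 2) sequentially"
    using asy2 eventually_ge_at_top[of 1]
  proof eventually_elim
    case (elim n)
    then show ?case using prob_A[of n] by (simp add: A_def)
  qed
  have "summable (\<lambda>n. 1 / real n ^ 2)"
    using inverse_power_summable[of 2, where 'a=real] by (simp add: inverse_eq_divide)
  then have sm: "summable (\<lambda>n. prob (A n))"
    by (rule summable_comparison_test_ev[OF ev1])
  have "AE \<omega> in M. eventually (\<lambda>n. \<omega> \<in> space M - A n) sequentially"
    by (rule borel_cantelli_AE1[OF Aev _ sm]) (simp add: less_top[symmetric])
  then show ?thesis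
    by eventually_elim (auto elim!: eventually_mono simp: A_def not_less)
qed

lemma main_g:
  assumes g: "\<And>k y. k \<ge> 1 \<Longrightarrow> \<bar>g k y - fmap k y\<bar> \<le> C"
  shows "AE \<omega> in M. finite {n. Fcomp g \<xi> n \<omega> x \<in> {a..b}}"
  using AE_pos AE_esc
proof eventually_elim
  case (elim \<omega>)
  note posw = elim(1)
  note escw = elim(2)
  define C' where "C' = max C 0"
  define B where "B = \<bar>a\<bar> + \<bar>b\<bar>"
  have g': "\<And>k y. k \<ge> 1 \<Longrightarrow> \<bar>g k y - fmap k y\<bar> \<le> C'" using g unfolding C'_def by (metis max.coboundedI1)
  have "eventually (\<lambda>n. exp (sqrt (real n)) / real n \<ge> 1 + C' + (\<bar>x\<bar> + B + 1)) sequentially"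
    using asy by (simp add: filterlim_at_top)
  then have "eventually (\<lambda>n. Fcomp g \<xi> n \<omega> x \<notin> {a..b}) sequentially"
    using escw eventually_ge_at_top[of 1]
  proof eventually_elim
    case (elim n)
    have n0: "real n > 0" using elim by simp
    have "exp (sqrt (real n)) \<ge> real n * (1 + C' + (\<bar>x\<bar> + B + 1))"
      using elim(1) n0 by (simp add: field_simps)
    also have "real n * (1 + C' + (\<bar>x\<bar> + B + 1)) \<ge> real n + real n * C' + 1 * (\<bar>x\<bar> + B + 1)"
    proof -
      have "real n * (\<bar>x\<bar> + B + 1) \<ge> 1 * (\<bar>x\<bar> + B + 1)"
        using elim(3) unfolding B_def by (intro mult_right_mono) auto
      then show ?thesis by (simp add: algebra_simps)
    qed
    finally have W: "exp (sqrt (real n)) \<ge> real n + real n * C' + \<bar>x\<bar> + B + 1" by simp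
    show ?case
      apply (rule escape[where C=C' and g=g and \<xi>=\<xi> and \<omega>=\<omega> and n=n and L="Lf n" and x=x and B=B])
      using posw g' elim Lf_ge W by (auto simp: C'_def B_def)
  qed
  then obtain N where N: "\<And>n. n \<ge> N \<Longrightarrow> Fcomp g \<xi> n \<omega> x \<notin> {a..b}"
    by (auto simp: eventually_sequentially)
  have "{n. Fcomp g \<xi> n \<omega> x \<in> {a..b}} \<subseteq> {..<N}" using N by (auto simp: not_le[symmetric])
  then show ?case by (rule finite_subset) simp
qed

end

theorem mainTheorem11:
  fixes M :: "'a measure" and \<xi> :: "nat \<Rightarrow> 'a \<Rightarrow> nat"
  assumes "prob_space M"
    and "prob_space.indep_vars M (\<lambda>_. count_space UNIV) \<xi> UNIV"
    and "\<And>n k. k \<ge> 1 \<Longrightarrow> measure M {\<omega> \<in> space M. \<xi> n \<omega> = k} = pk k"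
  shows "(\<forall>x::real. \<forall>a b::real.
            AE \<omega> in M. finite {n. Fcomp fmap \<xi> n \<omega> x \<in> {a..b}})
       \<and> (\<forall>g :: nat \<Rightarrow> real \<Rightarrow> real.
            (\<exists>C. \<forall>k\<ge>1. \<forall>y. \<bar>g k y - fmap k y\<bar> \<le> C) \<longrightarrow>
            (\<forall>x::real. \<forall>a b::real.
              AE \<omega> in M. finite {n. Fcomp g \<xi> n \<omega> x \<in> {a..b}}))"
proof (intro conjI allI impI)
  fix x a b :: real
  show "AE \<omega> in M. finite {n. Fcomp fmap \<xi> n \<omega> x \<in> {a..b}}"
  proof (rule main_g[OF assms, where g=fmap and C=0])
    fix k :: nat and y :: real
    show "\<bar>fmap k y - fmap k y\<bar> \<le> 0" by simp
  qed
next
  fix g :: "nat \<Rightarrow> real \<Rightarrow> real" and x a b :: real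
  assume "\<exists>C. \<forall>k\<ge>1. \<forall>y. \<bar>g k y - fmap k y\<bar> \<le> C"
  then obtain C where C: "\<And>k y. k \<ge> 1 \<Longrightarrow> \<bar>g k y - fmap k y\<bar> \<le> C" by blast
  show "AE \<omega> in M. finite {n. Fcomp g \<xi> n \<omega> x \<in> {a..b}}"
    by (rule main_g[OF assms C])
qed

end
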